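(* Every state $\rho\in\mathrm{co}(\mathcal U)$ satisfies $|\rho_{ij}|\le\min\{\rho_{ii},\rho_{jj}\}$ for all pairs of indices $i,j$. Consequently, the only pure states in $\mathrm{co}(\mathcal U)$ are the uniformly coherent ones.
   Context: Fixed computational basis $\{|i\rangle\}_{i=1}^d$. $\mathcal U_k$ is the set of uniformly coherent states $|\Psi\rangle=k^{-1/2}\sum_{j\in J}e^{i\theta_j}|j\rangle$, $|J|=k$, $\theta_j\in\mathbb R$; $\mathcal U=\bigcup_{k=1}^d\mathcal U_k$ (as density matrices), and $\mathrm{co}(\mathcal U)$ its convex hull. A pure state is uniformly coherent if it lies in $\mathcal U$. *)

theory Defs
  imports "HOL-Analysis.Analysis"
begin

text \<open>States on C^d, with the computational basis indexed by a finite type 'n (d = CARD('n)).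
  Density matrices are elements of complex^'n^'n; rho $ i $ j is the (i,j) entry.\<close>

definition ket_bra :: "complex ^'n \<Rightarrow> complex ^'n ^'n" where
  "ket_bra \<psi> = (\<chi> i j. \<psi> $ i * cnj (\<psi> $ j))"

definition unif_vec :: "'n::finite set \<Rightarrow> ('n \<Rightarrow> real) \<Rightarrow> complex ^'n" where
  "unif_vec J \<theta> = (\<chi> j. if j \<in> J then cis (\<theta> j) / complex_of_real (sqrt (real (card J))) else 0)"

definition unif_coherent :: "(complex ^'n::finite ^'n) set" where
  "unif_coherent = {ket_bra (unif_vec J \<theta>) | J \<theta>. J \<noteq> {}}"

definition pure_state :: "complex ^'n::finite ^'n \<Rightarrow> bool" where
  "pure_state \<rho> \<longleftrightarrow> (\<exists>\<phi>::complex^'n. (\<Sum>i\<in>UNIV. (cmod (\<phi> $ i))\<^sup>2) = 1 \<and> \<rho> = ket_bra \<phi>)"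

end

theory Submission
  imports Defs
begin

lemma kb_entry: "ket_bra v $ i $ j = v $ i * cnj (v $ j)"
  by (simp add: ket_bra_def)

lemma kb_norm: "cmod (ket_bra v $ i $ j) = cmod (v $ i) * cmod (v $ j)"
  by (simp add: kb_entry norm_mult)

lemma kb_diag: "Re (ket_bra v $ i $ i) = (cmod (v $ i))\<^sup>2"
proof -
  have "ket_bra v $ i $ i = complex_of_real ((cmod (v $ i))\<^sup>2)"
    by (metis kb_entry complex_norm_square)
  then show ?thesis by simp
qed

definition Pset :: "(complex ^'n::finite ^'n) set" where
  "Pset = {\<rho>. \<forall>i j. cmod (\<rho> $ i $ j) \<le> Re (\<rho> $ i $ i) \<and> cmod (\<rho> $ i $ j) \<le> Re (\<rho> $ j $ j)}"

lemma convex_Pset: "convex Pset"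
  unfolding convex_def
proof (intro ballI allI impI)
  fix x y :: "complex ^'n ^'n" and u v :: real
  assume xP: "x \<in> Pset" and yP: "y \<in> Pset" and u: "0 \<le> u" and v: "0 \<le> v" and uv: "u + v = 1"
  have x: "\<And>i j. cmod (x $ i $ j) \<le> Re (x $ i $ i) \<and> cmod (x $ i $ j) \<le> Re (x $ j $ j)"
    using xP by (auto simp: Pset_def)
  have y: "\<And>i j. cmod (y $ i $ j) \<le> Re (y $ i $ i) \<and> cmod (y $ i $ j) \<le> Re (y $ j $ j)"
    using yP by (auto simp: Pset_def)
  have "cmod ((u *\<^sub>R x + v *\<^sub>R y) $ i $ j) \<le> Re ((u *\<^sub>R x + v *\<^sub>R y) $ i $ i) \<and>
        cmod ((u *\<^sub>R x + v *\<^sub>R y) $ i $ j) \<le> Re ((u *\<^sub>R x + v *\<^sub>R y) $ j $ j)" for i j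
  proof -
    have t: "cmod (u *\<^sub>R x $ i $ j + v *\<^sub>R y $ i $ j) \<le> u * cmod (x $ i $ j) + v * cmod (y $ i $ j)"
      using norm_triangle_ineq[of "u *\<^sub>R x $ i $ j" "v *\<^sub>R y $ i $ j"] u v by simp
    have "u * cmod (x $ i $ j) \<le> u * Re (x $ i $ i)" "v * cmod (y $ i $ j) \<le> v * Re (y $ i $ i)"
         "u * cmod (x $ i $ j) \<le> u * Re (x $ j $ j)" "v * cmod (y $ i $ j) \<le> v * Re (y $ j $ j)"
      using x[of i j] y[of i j] u v by (auto intro: mult_left_mono)
    then show ?thesis using t by simp
  qed
  then show "u *\<^sub>R x + v *\<^sub>R y \<in> Pset" by (simp add: Pset_def)
qed

lemma unif_norm: "cmod (unif_vec J \<theta> $ i) = (if i \<in> J then 1 / sqrt (real (card J)) else 0)"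
  by (simp add: unif_vec_def norm_divide)

lemma U_sub: "unif_coherent \<subseteq> Pset"
proof
  fix \<rho> :: "complex ^'n ^'n" assume "\<rho> \<in> unif_coherent"
  then obtain J \<theta> where r: "\<rho> = ket_bra (unif_vec J \<theta>)" by (auto simp: unif_coherent_def)
  show "\<rho> \<in> Pset"
    unfolding Pset_def r by (auto simp: kb_norm kb_diag unif_norm power2_eq_square)
qed

lemma hull_sub: "convex hull (unif_coherent :: (complex ^'n::finite ^'n) set) \<subseteq> Pset"
  using U_sub convex_Pset by (rule hull_minimal)

theorem lemma12:
  shows "(\<forall>\<rho> \<in> convex hull (unif_coherent :: (complex ^'n::finite ^'n) set).
            \<forall>i j. cmod (\<rho> $ i $ j) \<le> min (Re (\<rho> $ i $ i)) (Re (\<rho> $ j $ j)))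
       \<and> (\<forall>\<rho> :: complex ^'n ^'n. pure_state \<rho> \<and> \<rho> \<in> convex hull unif_coherent
            \<longrightarrow> \<rho> \<in> unif_coherent)"
proof (intro conjI allI ballI impI)
  fix \<rho> :: "complex ^'n ^'n" and i j assume "\<rho> \<in> convex hull unif_coherent"
  then have "\<rho> \<in> Pset" using hull_sub by blast
  then show "cmod (\<rho> $ i $ j) \<le> min (Re (\<rho> $ i $ i)) (Re (\<rho> $ j $ j))"
    by (simp add: Pset_def)
next
  fix \<rho> :: "complex ^'n ^'n" assume a: "pure_state \<rho> \<and> \<rho> \<in> convex hull unif_coherent"
  then obtain \<phi> :: "complex^'n" where s: "(\<Sum>i\<in>UNIV. (cmod (\<phi> $ i))\<^sup>2) = 1" and r: "\<rho> = ket_bra \<phi>"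
    by (auto simp: pure_state_def)
  have P: "\<rho> \<in> Pset" using a hull_sub by blast
  have le: "cmod (\<phi> $ i) \<le> cmod (\<phi> $ j)" if "\<phi> $ i \<noteq> 0" "\<phi> $ j \<noteq> 0" for i j
  proof -
    have "cmod (\<phi> $ i) * cmod (\<phi> $ j) \<le> cmod (\<phi> $ j) * cmod (\<phi> $ j)"
      using P unfolding Pset_def r by (auto simp: kb_norm kb_diag power2_eq_square)
    then show ?thesis using that by simp
  qed
  define J where "J = {i. \<phi> $ i \<noteq> 0}"
  have "J \<noteq> {}"
  proof
    assume "J = {}" then have "\<forall>i. \<phi> $ i = 0" by (auto simp: J_def)
    then show False using s by simp
  qed
  then obtain i0 where i0: "i0 \<in> J" by blast
  define c where "c = cmod (\<phi> $ i0)"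
  have cJ: "cmod (\<phi> $ i) = c" if "i \<in> J" for i
    using le[of i i0] le[of i0 i] that i0 by (auto simp: J_def c_def)
  have c0: "c > 0" using i0 by (simp add: c_def J_def)
  have "(\<Sum>i\<in>UNIV. (cmod (\<phi> $ i))\<^sup>2) = (\<Sum>i\<in>J. (cmod (\<phi> $ i))\<^sup>2)"
    by (rule sum.mono_neutral_right) (auto simp: J_def)
  also have "\<dots> = real (card J) * c\<^sup>2" using cJ by simp
  finally have kc: "real (card J) * c\<^sup>2 = 1" using s by simp
  have cs: "c = 1 / sqrt (real (card J))"
  proof -
    have "sqrt (real (card J)) * c = 1"
      using kc c0 by (metis real_sqrt_mult real_sqrt_one real_sqrt_abs abs_of_pos)
    then have "sqrt (real (card J)) \<noteq> 0" by auto
    then show ?thesis using \<open>sqrt (real (card J)) * c = 1\<close> by (simp add: field_simps)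
  qed
  define \<theta> where "\<theta> = (\<lambda>j. Arg (\<phi> $ j))"
  have "\<phi> = unif_vec J \<theta>"
  proof (rule vec_eq_iff[THEN iffD2], rule allI)
    fix j
    show "\<phi> $ j = unif_vec J \<theta> $ j"
    proof (cases "j \<in> J")
      case True
      have "\<phi> $ j = complex_of_real (cmod (\<phi> $ j)) * cis (Arg (\<phi> $ j))"
        by (rule rcis_cmod_Arg[symmetric, unfolded rcis_def])
      then show ?thesis using True cJ[OF True] cs
        by (simp add: unif_vec_def \<theta>_def)
    next
      case False then show ?thesis by (simp add: unif_vec_def J_def)
    qed
  qed
  then show "\<rho> \<in> unif_coherent" using r \<open>J \<noteq> {}\<close> by (auto simp: unif_coherent_def)
qed

end
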